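(* Let $\phi_1,\phi_2:\mathbb{R}^m\to\mathbb{R}$, where $\phi_1$ is $L$-Lipschitz, and suppose $|\phi_1(w)-\phi_2(w)|\le V$ for all $w\in\mathbb{R}^m$. For $\mu>0$, $y\in\mathbb{R}^m$ and $u\sim\mathcal{N}(0,I_m)$ define $g(y;u)=\frac1\mu\big(\phi_1(y+\mu u)-\phi_2(y)\big)u$. Then $\mathbb{E}_u[g(y;u)]=\nabla\phi_{1,\mu}(y)$ and $$\mathbb{E}_u\big[\|g(y;u)\|^2\big]\le2L^2(m+4)^2+\frac{2mV^2}{\mu^2}.$$
   Context: $\phi_{1,\mu}(y)=\mathbb{E}_{u\sim\mathcal{N}(0,I_m)}[\phi_1(y+\mu u)]$ denotes the Gaussian smoothing of $\phi_1$ with parameter $\mu$ (it is differentiable). In the paper this is applied with $\phi_1=f_k^L(x,\cdot)$, $\phi_2=f_{k+1/2}^L(x,\cdot)$, Lovász extensions of consecutive cost functions in an online problem whose values change by at most $V$ between queries. *)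

theory Defs
  imports "HOL-Analysis.Analysis" "HOL-Probability.Probability"
begin

definition std_gaussian :: "(real ^ 'm) measure" where
  "std_gaussian = density lborel
     (\<lambda>x. ennreal ((2 * pi) powr (- real CARD('m) / 2) * exp (- (norm x)\<^sup>2 / 2)))"

definition gauss_smooth :: "real \<Rightarrow> (real ^ 'm \<Rightarrow> real) \<Rightarrow> real ^ 'm \<Rightarrow> real" where
  "gauss_smooth \<mu> \<phi> y = (\<integral>u. \<phi> (y + \<mu> *\<^sub>R u) \<partial>(std_gaussian :: (real ^ 'm) measure))"

definition zo_grad :: "real \<Rightarrow> (real ^ 'm \<Rightarrow> real) \<Rightarrow> (real ^ 'm \<Rightarrow> real) \<Rightarrow> real ^ 'm \<Rightarrow> real ^ 'm \<Rightarrow> real ^ 'm" where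
  "zo_grad \<mu> \<phi>1 \<phi>2 y u = (1 / \<mu>) *\<^sub>R ((\<phi>1 (y + \<mu> *\<^sub>R u) - \<phi>2 y) *\<^sub>R u)"

end

theory Submission
  imports Defs
begin


lemma lborel_prod_int:
  fixes g :: "'a::euclidean_space \<Rightarrow> real \<Rightarrow> real"
  assumes int: "\<And>b. b \<in> Basis \<Longrightarrow> integrable lborel (g b)"
  shows "integrable lborel (\<lambda>x::'a. \<Prod>b\<in>Basis. g b (x \<bullet> b))"
    and "(\<integral>x. (\<Prod>b\<in>Basis. g b (x \<bullet> b)) \<partial>(lborel::'a measure)) = (\<Prod>b\<in>Basis. integral\<^sup>L lborel (g b))"
proof -
  interpret P: product_sigma_finite "\<lambda>_::'a. lborel::real measure"
    by (simp add: product_sigma_finite_def sigma_finite_lborel)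
  have meas[measurable]: "\<And>b. b \<in> Basis \<Longrightarrow> g b \<in> borel_measurable borel"
    using borel_measurable_integrable[OF int] by simp
  have eq: "\<And>f. (\<Prod>b\<in>Basis. g b ((\<Sum>c\<in>Basis. f c *\<^sub>R c) \<bullet> b)) = (\<Prod>b\<in>Basis. g b (f b))"
    by (intro prod.cong refl) simp
  have m1: "(\<lambda>f. \<Sum>c\<in>Basis. f c *\<^sub>R c) \<in> measurable (\<Pi>\<^sub>M b\<in>Basis. lborel) (borel :: 'a measure)"
    by measurable
  have m2: "(\<lambda>x::'a. \<Prod>b\<in>Basis. g b (x \<bullet> b)) \<in> borel_measurable borel"
    by measurable
  have pi: "integrable (\<Pi>\<^sub>M b\<in>Basis. lborel) (\<lambda>f. \<Prod>b\<in>Basis. g b (f b))"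
    by (intro P.product_integrable_prod) (auto intro: int)
  show "integrable lborel (\<lambda>x::'a. \<Prod>b\<in>Basis. g b (x \<bullet> b))"
    apply (subst lborel_eq)
    apply (subst integrable_distr_eq[OF m1 m2])
    using pi by (simp add: eq)
  have "(\<integral>x. (\<Prod>b\<in>Basis. g b (x \<bullet> b)) \<partial>(lborel::'a measure)) =
     (\<integral>f. (\<Prod>b\<in>Basis. g b (f b)) \<partial>(\<Pi>\<^sub>M b\<in>Basis. lborel))"
    apply (subst lborel_eq)
    apply (subst integral_distr[OF m1 m2])
    by (simp add: eq)
  also have "\<dots> = (\<Prod>b\<in>Basis. integral\<^sup>L lborel (g b))"
    by (intro P.product_integral_prod) (auto intro: int)
  finally show "(\<integral>x. (\<Prod>b\<in>Basis. g b (x \<bullet> b)) \<partial>(lborel::'a measure)) = (\<Prod>b\<in>Basis. integral\<^sup>L lborel (g b))" .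
qed



lemma gdens_eq:
  fixes x :: "real^'m"
  shows "(2 * pi) powr (- real CARD('m) / 2) * exp (- (norm x)\<^sup>2 / 2) = (\<Prod>b\<in>Basis. std_normal_density (x \<bullet> b))"
proof -
  have n: "(norm x)\<^sup>2 = (\<Sum>b\<in>Basis. (x \<bullet> b)\<^sup>2)"
    unfolding power2_norm_eq_inner by (subst euclidean_inner) (simp add: power2_eq_square)
  have c: "(2 * pi) powr (- real CARD('m) / 2) = (1 / sqrt (2 * pi)) ^ CARD('m)"
  proof -
    have "(1 / sqrt (2 * pi)) = (2*pi) powr (-1/2)"
      by (simp add: powr_minus_divide powr_half_sqrt[symmetric])
    then have "(1 / sqrt (2 * pi)) ^ CARD('m) = ((2*pi) powr (-1/2)) powr (real CARD('m))"
      by (simp add: powr_realpow)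
    also have "\<dots> = (2 * pi) powr (- real CARD('m) / 2)"
      by (simp add: powr_powr)
    finally show ?thesis by simp
  qed
  have "(\<Prod>b\<in>Basis. std_normal_density (x \<bullet> b)) = (\<Prod>b\<in>(Basis::(real^'m) set). 1 / sqrt (2 * pi)) * (\<Prod>b\<in>Basis. exp (- (x \<bullet> b)\<^sup>2 / 2))"
    unfolding std_normal_density_def by (rule prod.distrib)
  also have "\<dots> = (1 / sqrt (2 * pi)) ^ CARD('m) * exp (- (norm x)\<^sup>2 / 2)"
    by (simp add: n exp_sum[symmetric] sum_divide_distrib[symmetric] sum_negf)
  finally show ?thesis using c by simp
qed

lemma gdens_meas[measurable]:
  "(\<lambda>x::real^'m. (2 * pi) powr (- real CARD('m) / 2) * exp (- (norm x)\<^sup>2 / 2)) \<in> borel_measurable borel"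
  by measurable

lemma gauss_prod:
  fixes g :: "real^'m \<Rightarrow> real \<Rightarrow> real"
  assumes int: "\<And>b. b \<in> Basis \<Longrightarrow> integrable lborel (\<lambda>t. std_normal_density t * g b t)"
    and meas[measurable]: "\<And>b. b \<in> Basis \<Longrightarrow> g b \<in> borel_measurable borel"
  shows "integrable std_gaussian (\<lambda>x::real^'m. \<Prod>b\<in>Basis. g b (x \<bullet> b))"
    and "(\<integral>x. (\<Prod>b\<in>Basis. g b (x \<bullet> b)) \<partial>(std_gaussian::(real^'m) measure)) =
         (\<Prod>b\<in>Basis. \<integral>t. std_normal_density t * g b t \<partial>lborel)"
proof -
  have mF: "(\<lambda>x::real^'m. \<Prod>b\<in>Basis. g b (x \<bullet> b)) \<in> borel_measurable lborel"
    by measurable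
  have eq: "\<And>x::real^'m. ((2 * pi) powr (- real CARD('m) / 2) * exp (- (norm x)\<^sup>2 / 2)) *\<^sub>R (\<Prod>b\<in>Basis. g b (x \<bullet> b))
     = (\<Prod>b\<in>Basis. std_normal_density (x \<bullet> b) * g b (x \<bullet> b))"
    unfolding gdens_eq by (simp add: prod.distrib)
  have gm: "(\<lambda>x::real^'m. (2 * pi) powr (- real CARD('m) / 2) * exp (- (norm x)\<^sup>2 / 2)) \<in> borel_measurable lborel"
    by simp
  have nn: "AE x in lborel. 0 \<le> (\<lambda>x::real^'m. (2 * pi) powr (- real CARD('m) / 2) * exp (- (norm x)\<^sup>2 / 2)) x"
    by simp
  have I2: "integrable lborel (\<lambda>x::real^'m. ((2 * pi) powr (- real CARD('m) / 2) * exp (- (norm x)\<^sup>2 / 2)) *\<^sub>R (\<Prod>b\<in>Basis. g b (x \<bullet> b)))"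
    unfolding eq using lborel_prod_int(1)[of "\<lambda>b t. std_normal_density t * g b t"] int by simp
  show "integrable std_gaussian (\<lambda>x::real^'m. \<Prod>b\<in>Basis. g b (x \<bullet> b))"
    unfolding std_gaussian_def by (rule integrable_density[OF mF gm nn, THEN iffD2, OF I2])
  have "(\<integral>x. (\<Prod>b\<in>Basis. g b (x \<bullet> b)) \<partial>(std_gaussian::(real^'m) measure)) =
     (\<integral>x. (\<Prod>b\<in>Basis. std_normal_density (x \<bullet> b) * g b (x \<bullet> b)) \<partial>lborel)"
    unfolding std_gaussian_def integral_density[OF mF gm nn] eq ..
  also have "\<dots> = (\<Prod>b\<in>Basis. \<integral>t. std_normal_density t * g b t \<partial>lborel)"
    using lborel_prod_int(2)[of "\<lambda>b t. std_normal_density t * g b t"] int by simp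
  finally show "(\<integral>x. (\<Prod>b\<in>Basis. g b (x \<bullet> b)) \<partial>(std_gaussian::(real^'m) measure)) =
         (\<Prod>b\<in>Basis. \<integral>t. std_normal_density t * g b t \<partial>lborel)" .
qed



lemma gauss_mono:
  fixes k :: "real^'m \<Rightarrow> nat"
  shows "integrable std_gaussian (\<lambda>x::real^'m. \<Prod>b\<in>Basis. (x \<bullet> b) ^ k b)"
    and "(\<integral>x. (\<Prod>b\<in>Basis. (x \<bullet> b) ^ k b) \<partial>(std_gaussian::(real^'m) measure)) =
         (\<Prod>b\<in>Basis. \<integral>t. std_normal_density t * t ^ k b \<partial>lborel)"
  using gauss_prod[of "\<lambda>b t. t ^ k b"] integrable_std_normal_moment by auto

lemma nm0: "(\<integral>t. std_normal_density t * t ^ 0 \<partial>lborel) = 1"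
  using integral_std_normal_moment_even[of 0] by simp
lemma nm1: "(\<integral>t. std_normal_density t * t ^ 1 \<partial>lborel) = 0"
  using integral_std_normal_moment_odd[of 0] by simp
lemma nm2: "(\<integral>t. std_normal_density t * t ^ 2 \<partial>lborel) = 1"
  using integral_std_normal_moment_even[of 1] by simp
lemma nm4: "(\<integral>t. std_normal_density t * t ^ 4 \<partial>lborel) = 3"
  using integral_std_normal_moment_even[of 2] by (simp add: fact_numeral)

lemma gauss_lin:
  fixes b :: "real^'m" assumes b: "b \<in> Basis"
  shows "integrable std_gaussian (\<lambda>x::real^'m. x \<bullet> b)" "(\<integral>x. x \<bullet> b \<partial>(std_gaussian::(real^'m) measure)) = 0"
proof -
  define k where "k = (\<lambda>c::real^'m. if c = b then 1 else (0::nat))"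
  have e: "\<And>x. (\<Prod>c\<in>Basis. (x \<bullet> c) ^ k c) = x \<bullet> b"
    using b by (simp add: k_def prod.delta' if_distrib[of "\<lambda>n. _ ^ n"] cong: if_cong)
  show "integrable std_gaussian (\<lambda>x::real^'m. x \<bullet> b)" using gauss_mono(1)[of k] e by simp
  have "(\<Prod>c\<in>Basis. \<integral>t. std_normal_density t * t ^ k c \<partial>lborel) = 0"
    using b by (intro prod_zero) (auto simp: k_def nm1[simplified] intro!: bexI[of _ b])
  then show "(\<integral>x. x \<bullet> b \<partial>(std_gaussian::(real^'m) measure)) = 0" using gauss_mono(2)[of k] e by simp
qed



lemma norm_sq_sum: "(norm (x::'a::euclidean_space))\<^sup>2 = (\<Sum>b\<in>Basis. (x \<bullet> b)\<^sup>2)"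
  unfolding power2_norm_eq_inner by (subst euclidean_inner) (simp add: power2_eq_square)

lemma gauss_sq:
  shows "integrable std_gaussian (\<lambda>x::real^'m. (norm x)\<^sup>2)"
    "(\<integral>x. (norm x)\<^sup>2 \<partial>(std_gaussian::(real^'m) measure)) = real CARD('m)"
proof -
  have I: "integrable std_gaussian (\<lambda>x::real^'m. (x \<bullet> b)\<^sup>2) \<and> (\<integral>x. (x \<bullet> b)\<^sup>2 \<partial>(std_gaussian::(real^'m) measure)) = 1"
    if b: "b \<in> Basis" for b :: "real^'m"
  proof -
    define k where "k = (\<lambda>c::real^'m. if c = b then 2 else (0::nat))"
    have e: "\<And>x. (\<Prod>c\<in>Basis. (x \<bullet> c) ^ k c) = (x \<bullet> b)\<^sup>2"
      using b by (simp add: k_def if_distrib[of "\<lambda>n. _ ^ n"] cong: if_cong)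
    have f: "\<And>c. (\<integral>t. std_normal_density t * t ^ k c \<partial>lborel) = 1"
      subgoal for c by (cases "c = b") (simp_all add: k_def nm0[simplified] nm2)
      done
    show ?thesis using gauss_mono[of k] e f by simp
  qed
  show "integrable std_gaussian (\<lambda>x::real^'m. (norm x)\<^sup>2)"
    unfolding norm_sq_sum using I by auto
  have "(\<integral>x. (norm x)\<^sup>2 \<partial>(std_gaussian::(real^'m) measure)) = (\<Sum>b\<in>Basis. \<integral>x. (x \<bullet> b)\<^sup>2 \<partial>(std_gaussian::(real^'m) measure))"
    unfolding norm_sq_sum by (rule Bochner_Integration.integral_sum) (simp add: I)
  also have "\<dots> = (\<Sum>b\<in>(Basis::(real^'m) set). 1)" using I by (intro sum.cong) auto
  finally show "(\<integral>x. (norm x)\<^sup>2 \<partial>(std_gaussian::(real^'m) measure)) = real CARD('m)" by simp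
qed

lemma gauss_4:
  shows "integrable std_gaussian (\<lambda>x::real^'m. (norm x)^4)"
    "(\<integral>x. (norm x)^4 \<partial>(std_gaussian::(real^'m) measure)) = real CARD('m) * (real CARD('m) + 2)"
proof -
  have I: "integrable std_gaussian (\<lambda>x::real^'m. (x \<bullet> b)\<^sup>2 * (x \<bullet> c)\<^sup>2) \<and>
     (\<integral>x. (x \<bullet> b)\<^sup>2 * (x \<bullet> c)\<^sup>2 \<partial>(std_gaussian::(real^'m) measure)) = (if b = c then 3 else 1)"
    if b: "b \<in> Basis" and c: "c \<in> Basis" for b c :: "real^'m"
  proof -
    define k where "k = (\<lambda>d::real^'m. (if d = b then 2 else (0::nat)) + (if d = c then 2 else 0))"
    have e: "\<And>x. (\<Prod>d\<in>Basis. (x \<bullet> d) ^ k d) = (x \<bullet> b)\<^sup>2 * (x \<bullet> c)\<^sup>2"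
      using b c by (simp add: k_def power_add prod.distrib if_distrib[of "\<lambda>n. _ ^ n"] cong: if_cong)
    have f: "(\<Prod>d\<in>Basis. (\<integral>t. std_normal_density t * t ^ k d \<partial>lborel)) = (if b = c then 3 else 1)"
    proof (cases "b = c")
      case True
      have "\<And>d. (\<integral>t. std_normal_density t * t ^ k d \<partial>lborel) = (if d = b then 3 else 1)"
        subgoal for d by (cases "d = b") (simp_all add: k_def True nm0[simplified] nm4)
        done
      then show ?thesis using b True by simp
    next
      case False
      have "\<And>d. (\<integral>t. std_normal_density t * t ^ k d \<partial>lborel) = 1"
        subgoal for d by (cases "d = b"; cases "d = c") (use False in \<open>simp_all add: k_def nm0[simplified] nm2 nm2[unfolded power2_eq_square]\<close>)
        done
      then show ?thesis using False by simp
    qed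
    show ?thesis using gauss_mono[of k] e f by simp
  qed
  have n4: "\<And>x::real^'m. (norm x)^4 = (\<Sum>b\<in>Basis. \<Sum>c\<in>Basis. (x \<bullet> b)\<^sup>2 * (x \<bullet> c)\<^sup>2)"
  proof -
    fix x :: "real^'m"
    have "(norm x)^4 = ((norm x)\<^sup>2)\<^sup>2" by simp
    also have "\<dots> = (\<Sum>b\<in>Basis. \<Sum>c\<in>Basis. (x \<bullet> b)\<^sup>2 * (x \<bullet> c)\<^sup>2)"
      unfolding norm_sq_sum power2_eq_square[of "sum _ _"] sum_product ..
    finally show "(norm x)^4 = (\<Sum>b\<in>Basis. \<Sum>c\<in>Basis. (x \<bullet> b)\<^sup>2 * (x \<bullet> c)\<^sup>2)" .
  qed
  show "integrable std_gaussian (\<lambda>x::real^'m. (norm x)^4)"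
    unfolding n4 using I by auto
  have "(\<integral>x. (norm x)^4 \<partial>(std_gaussian::(real^'m) measure)) =
     (\<Sum>b\<in>Basis. \<Sum>c\<in>Basis. \<integral>x. (x \<bullet> b)\<^sup>2 * (x \<bullet> c)\<^sup>2 \<partial>(std_gaussian::(real^'m) measure))"
    unfolding n4 using I by (subst Bochner_Integration.integral_sum; auto intro!: sum.cong Bochner_Integration.integral_sum)
  also have "\<dots> = (\<Sum>b\<in>(Basis::(real^'m) set). \<Sum>c\<in>(Basis::(real^'m) set). (if b = c then 3 else 1))"
    using I by (intro sum.cong) auto
  also have "\<dots> = (\<Sum>b\<in>(Basis::(real^'m) set). real CARD('m) + 2)"
  proof (intro sum.cong refl)
    fix b :: "real^'m" assume b: "b \<in> Basis"
    have "(\<Sum>c\<in>(Basis::(real^'m) set). (if b = c then 3 else 1)) = (\<Sum>c\<in>(Basis::(real^'m) set). 1 + (if b = c then 2 else 0::real))"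
      by (intro sum.cong) auto
    also have "\<dots> = real CARD('m) + 2" using b by (simp add: sum.distrib)
    finally show "(\<Sum>c\<in>(Basis::(real^'m) set). (if b = c then 3 else 1)) = real CARD('m) + 2" .
  qed
  finally show "(\<integral>x. (norm x)^4 \<partial>(std_gaussian::(real^'m) measure)) = real CARD('m) * (real CARD('m) + 2)"
    by simp
qed



lemma nd_exp: "std_normal_density t * exp (c * t) = exp (c\<^sup>2 / 2) * normal_density c 1 t"
proof -
  have "- t\<^sup>2 / 2 + c * t = c\<^sup>2 / 2 + (- (t - c)\<^sup>2 / 2)" by (simp add: power2_eq_square field_simps)
  then have "exp (- t\<^sup>2 / 2) * exp (c * t) = exp (c\<^sup>2 / 2) * exp (- (t - c)\<^sup>2 / 2)"
    by (simp add: exp_add[symmetric])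
  then show ?thesis unfolding std_normal_density_def normal_density_def by simp
qed

lemma int_nd_exp_abs: "integrable lborel (\<lambda>t. std_normal_density t * exp (4 * \<bar>t\<bar>))"
proof -
  have i: "integrable lborel (\<lambda>t. std_normal_density t * exp (4 * t) + std_normal_density t * exp ((-4) * t))"
    unfolding nd_exp by auto
  show ?thesis
  proof (rule Bochner_Integration.integrable_bound[OF i])
    show "(\<lambda>t. std_normal_density t * exp (4 * \<bar>t\<bar>)) \<in> borel_measurable lborel" by measurable
    show "AE x in lborel. norm (std_normal_density x * exp (4 * \<bar>x\<bar>)) \<le> norm (std_normal_density x * exp (4 * x) + std_normal_density x * exp (- 4 * x))"
    proof (rule AE_I2)
      fix x :: real
      have p: "0 \<le> std_normal_density x" by simp
      have "exp (4 * \<bar>x\<bar>) \<le> exp (4 * x) + exp (- 4 * x)"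
        by (cases "x \<ge> 0") (simp_all add: add_increasing add_increasing2)
      then have "std_normal_density x * exp (4 * \<bar>x\<bar>) \<le> std_normal_density x * exp (4 * x) + std_normal_density x * exp (- 4 * x)"
        using p by (metis distrib_left mult_left_mono)
      then show "norm (std_normal_density x * exp (4 * \<bar>x\<bar>)) \<le> norm (std_normal_density x * exp (4 * x) + std_normal_density x * exp (- 4 * x))"
        by simp
    qed
  qed
qed

lemma gauss_dom: "integrable std_gaussian (\<lambda>x::real^'m. exp (4 * norm x))"
proof -
  have i: "integrable std_gaussian (\<lambda>x::real^'m. \<Prod>b\<in>Basis. exp (4 * \<bar>x \<bullet> b\<bar>))"
    using gauss_prod(1)[of "\<lambda>b t. exp (4 * \<bar>t\<bar>)"] int_nd_exp_abs by simp
  show ?thesis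
  proof (rule Bochner_Integration.integrable_bound[OF i])
    show "(\<lambda>x::real^'m. exp (4 * norm x)) \<in> borel_measurable std_gaussian"
      unfolding std_gaussian_def by measurable
    show "AE x in std_gaussian. norm (exp (4 * norm x)) \<le> norm (\<Prod>b\<in>Basis. exp (4 * \<bar>(x::real^'m) \<bullet> b\<bar>))"
    proof (rule AE_I2)
      fix x :: "real^'m"
      have "exp (4 * norm x) \<le> exp (4 * (\<Sum>b\<in>Basis. \<bar>x \<bullet> b\<bar>))"
        using norm_le_l1[of x] by simp
      also have "\<dots> = (\<Prod>b\<in>Basis. exp (4 * \<bar>x \<bullet> b\<bar>))"
        by (simp add: sum_distrib_left exp_sum)
      finally show "norm (exp (4 * norm x)) \<le> norm (\<Prod>b\<in>Basis. exp (4 * \<bar>x \<bullet> b\<bar>))"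
        by (simp add: prod_nonneg)
    qed
  qed
qed

lemma gauss_meas[measurable]: "sets (std_gaussian :: (real^'m) measure) = sets borel"
  unfolding std_gaussian_def by simp



definition pd :: "real^'m \<Rightarrow> real" where
  "pd x = (2 * pi) powr (- real CARD('m) / 2) * exp (- (norm x)\<^sup>2 / 2)"

lemma pd_meas[measurable]: "pd \<in> borel_measurable borel"
  unfolding pd_def by measurable

lemma gauss_def': "(std_gaussian :: (real^'m) measure) = density lborel (\<lambda>x. ennreal (pd x))"
  unfolding std_gaussian_def pd_def ..

lemma gauss_integral:
  fixes f :: "real^'m \<Rightarrow> real"
  assumes [measurable]: "f \<in> borel_measurable borel"
  shows "(\<integral>x. f x \<partial>std_gaussian) = (\<integral>x. pd x * f x \<partial>lborel)"
proof -
  have mF: "f \<in> borel_measurable lborel" by simp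
  have gm: "pd \<in> borel_measurable lborel" by simp
  have nn: "AE x in lborel. 0 \<le> pd x" by (simp add: pd_def)
  show ?thesis unfolding gauss_def' integral_density[OF mF gm nn] by simp
qed

lemma pd_shift: "pd (v - s) = pd v * exp (v \<bullet> s - (norm s)\<^sup>2 / 2)"
proof -
  have "(norm (v - s))\<^sup>2 = (norm v)\<^sup>2 - 2 * (v \<bullet> s) + (norm s)\<^sup>2"
    by (simp add: power2_norm_eq_inner inner_diff inner_commute)
  then have "- (norm (v - s))\<^sup>2 / 2 = - (norm v)\<^sup>2 / 2 + (v \<bullet> s - (norm s)\<^sup>2 / 2)"
    by (simp add: field_simps)
  then have "exp (- (norm (v - s))\<^sup>2 / 2) = exp (- (norm v)\<^sup>2 / 2) * exp (v \<bullet> s - (norm s)\<^sup>2 / 2)"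
    by (simp only: exp_add)
  then show ?thesis unfolding pd_def by simp
qed

lemma gauss_shift:
  fixes \<psi> :: "real^'m \<Rightarrow> real"
  assumes [measurable]: "\<psi> \<in> borel_measurable borel"
  shows "(\<integral>u. \<psi> (u + s) \<partial>std_gaussian) = (\<integral>v. exp (v \<bullet> s - (norm s)\<^sup>2 / 2) * \<psi> v \<partial>std_gaussian)"
proof -
  have "(\<integral>u. \<psi> (u + s) \<partial>std_gaussian) = (\<integral>u. pd u * \<psi> (u + s) \<partial>lborel)"
    by (rule gauss_integral) measurable
  also have "\<dots> = (\<integral>u. pd (s + u - s) * \<psi> (s + u) \<partial>lborel)"
    by (simp add: add.commute)
  also have "\<dots> = (\<integral>v. pd (v - s) * \<psi> v \<partial>(distr lborel borel ((+) s)))"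
    by (subst integral_distr) auto
  also have "\<dots> = (\<integral>v. pd (v - s) * \<psi> v \<partial>lborel)"
    by (simp add: lborel_distr_plus)
  also have "\<dots> = (\<integral>v. pd v * (exp (v \<bullet> s - (norm s)\<^sup>2 / 2) * \<psi> v) \<partial>lborel)"
    by (simp add: pd_shift mult.assoc)
  also have "\<dots> = (\<integral>v. exp (v \<bullet> s - (norm s)\<^sup>2 / 2) * \<psi> v \<partial>std_gaussian)"
    by (rule gauss_integral[symmetric]) measurable
  finally show ?thesis .
qed



lemma exp_rem: "\<bar>exp (a::real) - 1 - a\<bar> \<le> a\<^sup>2 * exp \<bar>a\<bar>"
proof -
  obtain t where t: "\<bar>t\<bar> \<le> \<bar>a\<bar>" "exp a = (\<Sum>m<2. (a ^ m) / fact m) + (exp t / fact 2) * a ^ 2"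
    using Maclaurin_exp_le[of a 2] by blast
  then have e: "exp a - 1 - a = exp t / 2 * a\<^sup>2" by (simp add: numeral_2_eq_2)
  moreover have "exp t \<le> exp \<bar>a\<bar>" using t(1) by simp
  then have "exp t / 2 \<le> exp \<bar>a\<bar>" using exp_gt_zero[of t] by linarith
  then have "exp t / 2 * a\<^sup>2 \<le> exp \<bar>a\<bar> * a\<^sup>2"
    by (intro mult_right_mono) auto
  moreover have "\<bar>exp a - 1 - a\<bar> = exp t / 2 * a\<^sup>2" unfolding e by simp
  ultimately show ?thesis
    by (simp add: mult.commute)
qed

lemma one_plus_le_exp: "1 + x \<le> exp (x::real)"
  using exp_ge_add_one_self by (simp add: add.commute)

lemma E_bound:
  fixes v s :: "real^'m"
  assumes s: "norm s \<le> 1"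
  shows "\<bar>exp (v \<bullet> s - (norm s)\<^sup>2 / 2) - 1 - v \<bullet> s\<bar> \<le> 2 * exp 1 * (norm s)\<^sup>2 * exp (3 * norm v)"
proof -
  define a where "a = v \<bullet> s - (norm s)\<^sup>2 / 2"
  define r where "r = norm s"
  define x where "x = norm v"
  have r0: "0 \<le> r" and r1: "r \<le> 1" and x0: "0 \<le> x" using s by (auto simp: r_def x_def)
  have "\<bar>v \<bullet> s\<bar> \<le> x * r" unfolding x_def r_def by (rule Cauchy_Schwarz_ineq2)
  moreover have "r\<^sup>2 \<le> r" using r0 r1 by (simp add: power2_eq_square mult_left_le)
  moreover have "\<bar>a\<bar> \<le> \<bar>v \<bullet> s\<bar> + r\<^sup>2 / 2"
    unfolding a_def r_def using abs_triangle_ineq4[of "v \<bullet> s" "(norm s)\<^sup>2 / 2"] by simp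
  ultimately have ab: "\<bar>a\<bar> \<le> r * (x + 1)"
    using r0 by (simp add: distrib_left mult.commute)
  have "0 \<le> r * (x + 1)" using r0 x0 by simp
  then have a2: "a\<^sup>2 \<le> r\<^sup>2 * (x + 1)\<^sup>2"
    using ab by (metis abs_le_square_iff power_mult_distrib abs_of_nonneg)
  have ea: "exp \<bar>a\<bar> \<le> exp (x + 1)"
  proof -
    have "r * (x + 1) \<le> x + 1" using r1 r0 x0 by (simp add: mult_left_le_one_le)
    then show ?thesis using ab by simp
  qed
  have x2: "(x + 1)\<^sup>2 \<le> exp (2 * x)"
  proof -
    have "(x + 1)\<^sup>2 \<le> (exp x)\<^sup>2" using one_plus_le_exp[of x] x0 by (intro power_mono) (auto simp: add.commute)
    then show ?thesis by (simp add: exp_double[symmetric] mult.commute)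
  qed
  have "exp a - 1 - (v \<bullet> s) = (exp a - 1 - a) - r\<^sup>2 / 2" by (simp add: a_def r_def)
  then have "\<bar>exp a - 1 - (v \<bullet> s)\<bar> \<le> \<bar>exp a - 1 - a\<bar> + r\<^sup>2 / 2"
    using abs_triangle_ineq4[of "exp a - 1 - a" "r\<^sup>2 / 2"] by simp
  also have "\<dots> \<le> a\<^sup>2 * exp \<bar>a\<bar> + r\<^sup>2 / 2" using exp_rem[of a] by simp
  also have "\<dots> \<le> (r\<^sup>2 * exp (2 * x)) * exp (x + 1) + r\<^sup>2 / 2"
  proof -
    have "r\<^sup>2 * (x + 1)\<^sup>2 \<le> r\<^sup>2 * exp (2 * x)" using x2 by (intro mult_left_mono) auto
    then have "a\<^sup>2 \<le> r\<^sup>2 * exp (2 * x)" using a2 by linarith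
    then have "a\<^sup>2 * exp \<bar>a\<bar> \<le> (r\<^sup>2 * exp (2 * x)) * exp (x + 1)"
      using ea by (intro mult_mono) auto
    then show ?thesis by simp
  qed
  also have "\<dots> = r\<^sup>2 * exp 1 * exp (3 * x) + r\<^sup>2 / 2"
    by (simp add: exp_add[symmetric] algebra_simps)
  also have "\<dots> \<le> 2 * exp 1 * r\<^sup>2 * exp (3 * x)"
  proof -
    have "1 \<le> exp 1 * exp (3 * x)" using x0 by (simp add: exp_add[symmetric])
    then have "r\<^sup>2 * 1 \<le> r\<^sup>2 * (exp 1 * exp (3 * x))"
      by (intro mult_left_mono) auto
    then have "r\<^sup>2 / 2 \<le> r\<^sup>2 * exp 1 * exp (3 * x)"
      using zero_le_power2[of r] mult.assoc[of "r\<^sup>2" "exp 1" "exp (3 * x)"] by linarith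
    moreover have "2 * exp 1 * r\<^sup>2 * exp (3 * x) = 2 * (r\<^sup>2 * exp 1 * exp (3 * x))" by simp
    ultimately show ?thesis by linarith
  qed
  finally show ?thesis unfolding a_def r_def x_def .
qed



lemma deriv_from_bound:
  fixes F :: "'a::real_normed_vector \<Rightarrow> real"
  assumes bl: "bounded_linear D" and bd: "\<And>s. norm s \<le> 1 \<Longrightarrow> \<bar>F s - F 0 - D s\<bar> \<le> M * (norm s)\<^sup>2"
  shows "(F has_derivative D) (at 0)"
  unfolding has_derivative_at
proof (intro conjI bl)
  show "(\<lambda>h. norm (F (0 + h) - F 0 - D h) / norm h) \<midarrow>0\<rightarrow> 0"
  proof (rule Lim_null_comparison)
    show "\<forall>\<^sub>F h in at 0. norm (norm (F (0 + h) - F 0 - D h) / norm h) \<le> M * norm h"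
      unfolding eventually_at
    proof (intro exI[of _ 1] conjI ballI impI)
      fix h :: 'a assume h: "h \<noteq> 0 \<and> dist h 0 < 1"
      then have n: "norm h \<le> 1" "0 < norm h" by auto
      have "norm (norm (F (0 + h) - F 0 - D h) / norm h) = \<bar>F h - F 0 - D h\<bar> / norm h" by simp
      also have "\<dots> \<le> M * (norm h)\<^sup>2 / norm h" using bd[OF n(1)] n(2) by (intro divide_right_mono) auto
      also have "\<dots> = M * norm h" using n(2) by (simp add: power2_eq_square)
      finally show "norm (norm (F (0 + h) - F 0 - D h) / norm h) \<le> M * norm h" .
    qed simp
    show "((\<lambda>h. M * norm h) \<longlongrightarrow> 0) (at (0::'a))"
      by (intro tendsto_mult_right_zero tendsto_norm_zero tendsto_ident_at)
  qed
qed

lemma exp_le_dom: "0 \<le> x \<Longrightarrow> k \<le> 4 \<Longrightarrow> exp (k * x) \<le> exp (4 * (x::real))"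
  by (simp add: mult_right_mono)

lemma smooth_deriv:
  fixes \<psi> :: "real^'m \<Rightarrow> real"
  assumes cont: "continuous_on UNIV \<psi>" and A: "0 \<le> A" and grow: "\<And>u. \<bar>\<psi> u\<bar> \<le> A * exp (norm u)"
  shows "((\<lambda>s. \<integral>u. \<psi> (u + s) \<partial>std_gaussian) has_derivative (\<lambda>s. (\<integral>v. \<psi> v *\<^sub>R v \<partial>std_gaussian) \<bullet> s)) (at 0)"
proof (rule deriv_from_bound)
  have m[measurable]: "\<psi> \<in> borel_measurable borel" using cont by (rule borel_measurable_continuous_onI)
  have dom: "integrable std_gaussian (\<lambda>x::real^'m. A * exp (4 * norm x))" by (rule integrable_mult_right) (rule gauss_dom)
  let ?w = "\<integral>v. \<psi> v *\<^sub>R v \<partial>std_gaussian"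
  show "bounded_linear (\<lambda>s. ?w \<bullet> s)" by (rule bounded_linear_inner_right)
  fix s :: "real^'m" assume s: "norm s \<le> 1"
  define E where "E v = exp (v \<bullet> s - (norm s)\<^sup>2 / 2)" for v :: "real^'m"
  have Em[measurable]: "E \<in> borel_measurable borel" unfolding E_def by measurable
  have Ele: "E v \<le> exp (norm v)" for v
  proof -
    have "v \<bullet> s \<le> norm v * norm s" by (rule norm_cauchy_schwarz)
    also have "\<dots> \<le> norm v" using s by (simp add: mult_left_le)
    finally have "v \<bullet> s - (norm s)\<^sup>2 / 2 \<le> norm v" using zero_le_power2[of "norm s"] by linarith
    then show ?thesis unfolding E_def by simp
  qed
  have i1: "integrable std_gaussian (\<lambda>v. E v * \<psi> v)"
  proof (rule Bochner_Integration.integrable_bound[OF dom])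
    show "(\<lambda>v. E v * \<psi> v) \<in> borel_measurable std_gaussian" by (simp add: gauss_def')
    show "AE x in std_gaussian. norm (E x * \<psi> x) \<le> norm (A * exp (4 * norm x))"
    proof (rule AE_I2)
      fix x :: "real^'m"
      have "\<bar>E x\<bar> * \<bar>\<psi> x\<bar> \<le> exp (norm x) * (A * exp (norm x))"
        using Ele[of x] grow[of x] by (intro mult_mono) (auto simp: E_def)
      also have "\<dots> = A * exp (2 * norm x)" by (simp add: exp_add[symmetric])
      also have "\<dots> \<le> A * exp (4 * norm x)" using A by (intro mult_left_mono exp_le_dom) auto
      finally show "norm (E x * \<psi> x) \<le> norm (A * exp (4 * norm x))" using A by (simp add: abs_mult)
    qed
  qed
  have i2: "integrable std_gaussian \<psi>"
  proof (rule Bochner_Integration.integrable_bound[OF dom])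
    show "\<psi> \<in> borel_measurable std_gaussian" by (simp add: gauss_def')
    show "AE x in std_gaussian. norm (\<psi> x) \<le> norm (A * exp (4 * norm x))"
    proof (rule AE_I2)
      fix x :: "real^'m"
      have "\<bar>\<psi> x\<bar> \<le> A * exp (1 * norm x)" using grow[of x] by simp
      also have "\<dots> \<le> A * exp (4 * norm x)" using A by (intro mult_left_mono exp_le_dom) auto
      finally show "norm (\<psi> x) \<le> norm (A * exp (4 * norm x))" using A by simp
    qed
  qed
  have i3: "integrable std_gaussian (\<lambda>v. \<psi> v *\<^sub>R v)"
  proof (rule Bochner_Integration.integrable_bound[OF dom])
    show "(\<lambda>v. \<psi> v *\<^sub>R v) \<in> borel_measurable std_gaussian" by (simp add: gauss_def')
    show "AE x in std_gaussian. norm (\<psi> x *\<^sub>R x) \<le> norm (A * exp (4 * norm x))"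
    proof (rule AE_I2)
      fix x :: "real^'m"
      have "norm x \<le> exp (norm x)" using one_plus_le_exp[of "norm x"] by linarith
      then have "\<bar>\<psi> x\<bar> * norm x \<le> (A * exp (norm x)) * exp (norm x)"
        using grow[of x] by (intro mult_mono) auto
      also have "\<dots> = A * exp (2 * norm x)" by (simp add: exp_add[symmetric])
      also have "\<dots> \<le> A * exp (4 * norm x)" using A by (intro mult_left_mono exp_le_dom) auto
      finally show "norm (\<psi> x *\<^sub>R x) \<le> norm (A * exp (4 * norm x))" using A by simp
    qed
  qed
  have i3': "integrable std_gaussian (\<lambda>v. \<psi> v * (v \<bullet> s))"
    using integrable_inner_left[OF i3, of s] by simp
  have Fs: "(\<integral>u. \<psi> (u + s) \<partial>std_gaussian) = (\<integral>v. E v * \<psi> v \<partial>std_gaussian)"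
    unfolding E_def by (rule gauss_shift) measurable
  have F0: "(\<integral>u. \<psi> (u + 0) \<partial>std_gaussian) = (\<integral>v. \<psi> v \<partial>std_gaussian)" by simp
  have Ds: "?w \<bullet> s = (\<integral>v. \<psi> v * (v \<bullet> s) \<partial>std_gaussian)"
    using integral_inner_left[of s std_gaussian "\<lambda>v. \<psi> v *\<^sub>R v"] i3 by simp
  have diff: "(\<integral>u. \<psi> (u + s) \<partial>std_gaussian) - (\<integral>u. \<psi> (u + 0) \<partial>std_gaussian) - ?w \<bullet> s
     = (\<integral>v. \<psi> v * (E v - 1 - v \<bullet> s) \<partial>std_gaussian)"
  proof -
    have "(\<integral>v. \<psi> v * (E v - 1 - v \<bullet> s) \<partial>std_gaussian) =
       (\<integral>v. (E v * \<psi> v - \<psi> v) - \<psi> v * (v \<bullet> s) \<partial>std_gaussian)"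
      by (intro Bochner_Integration.integral_cong) (auto simp: algebra_simps)
    also have "\<dots> = (\<integral>v. E v * \<psi> v \<partial>std_gaussian) - (\<integral>v. \<psi> v \<partial>std_gaussian) - (\<integral>v. \<psi> v * (v \<bullet> s) \<partial>std_gaussian)"
      using i1 i2 i3' by simp
    finally show ?thesis using Fs F0 Ds by simp
  qed
  let ?M = "2 * exp 1 * (\<integral>x. A * exp (4 * norm x) \<partial>(std_gaussian::(real^'m) measure))"
  have iR: "integrable std_gaussian (\<lambda>v. \<psi> v * (E v - 1 - v \<bullet> s))"
    using i1 i2 i3' by (simp add: algebra_simps)
  have iB: "integrable std_gaussian (\<lambda>v::real^'m. (2 * exp 1 * (norm s)\<^sup>2) * (A * exp (4 * norm v)))"
    by (rule integrable_mult_right) (rule dom)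
  have pb: "\<bar>\<psi> v * (E v - 1 - v \<bullet> s)\<bar> \<le> (2 * exp 1 * (norm s)\<^sup>2) * (A * exp (4 * norm v))" for v
  proof -
    have "\<bar>\<psi> v\<bar> * \<bar>E v - 1 - v \<bullet> s\<bar> \<le> (A * exp (norm v)) * (2 * exp 1 * (norm s)\<^sup>2 * exp (3 * norm v))"
      using grow[of v] E_bound[OF s, of v] unfolding E_def by (intro mult_mono) auto
    also have "\<dots> = (2 * exp 1 * (norm s)\<^sup>2) * (A * exp (4 * norm v))"
      by (simp add: exp_add[symmetric] algebra_simps)
    finally show ?thesis by (simp add: abs_mult)
  qed
  have "\<bar>\<integral>v. \<psi> v * (E v - 1 - v \<bullet> s) \<partial>std_gaussian\<bar> \<le> (\<integral>v. \<bar>\<psi> v * (E v - 1 - v \<bullet> s)\<bar> \<partial>std_gaussian)"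
    by (rule integral_abs_bound)
  also have "\<dots> \<le> (\<integral>v. (2 * exp 1 * (norm s)\<^sup>2) * (A * exp (4 * norm v)) \<partial>(std_gaussian::(real^'m) measure))"
    using iR iB pb by (intro integral_mono) auto
  also have "\<dots> = ?M * (norm s)\<^sup>2" by simp
  finally show "\<bar>(\<integral>u. \<psi> (u + s) \<partial>std_gaussian) - (\<integral>u. \<psi> (u + 0) \<partial>std_gaussian) - ?w \<bullet> s\<bar> \<le> ?M * (norm s)\<^sup>2"
    unfolding diff .
qed



lemma int_psi_scaled:
  fixes \<psi> :: "real^'m \<Rightarrow> real"
  assumes cont: "continuous_on UNIV \<psi>" and A: "0 \<le> A" and grow: "\<And>u. \<bar>\<psi> u\<bar> \<le> A * exp (norm u)"
  shows "integrable std_gaussian (\<lambda>v. \<psi> v *\<^sub>R v)"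
proof -
  have m[measurable]: "\<psi> \<in> borel_measurable borel" using cont by (rule borel_measurable_continuous_onI)
  have dom: "integrable std_gaussian (\<lambda>x::real^'m. A * exp (4 * norm x))"
    by (rule integrable_mult_right) (rule gauss_dom)
  show ?thesis
  proof (rule Bochner_Integration.integrable_bound[OF dom])
    show "(\<lambda>v. \<psi> v *\<^sub>R v) \<in> borel_measurable std_gaussian" by (simp add: gauss_def')
    show "AE x in std_gaussian. norm (\<psi> x *\<^sub>R x) \<le> norm (A * exp (4 * norm x))"
    proof (rule AE_I2)
      fix x :: "real^'m"
      have "norm x \<le> exp (norm x)" using one_plus_le_exp[of "norm x"] by linarith
      then have "\<bar>\<psi> x\<bar> * norm x \<le> (A * exp (norm x)) * exp (norm x)"
        using grow[of x] by (intro mult_mono) auto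
      also have "\<dots> = A * exp (2 * norm x)" by (simp add: exp_add[symmetric])
      also have "\<dots> \<le> A * exp (4 * norm x)" using A by (intro mult_left_mono exp_le_dom) auto
      finally show "norm (\<psi> x *\<^sub>R x) \<le> norm (A * exp (4 * norm x))" using A by simp
    qed
  qed
qed

lemma gauss_id:
  shows "integrable std_gaussian (\<lambda>u::real^'m. u)" "(\<integral>u. u \<partial>(std_gaussian::(real^'m) measure)) = 0"
proof -
  have e: "(\<lambda>u::real^'m. u) = (\<lambda>u. \<Sum>b\<in>Basis. (u \<bullet> b) *\<^sub>R b)"
    by (simp add: euclidean_representation)
  show I: "integrable std_gaussian (\<lambda>u::real^'m. u)"
    by (subst e) (auto intro!: Bochner_Integration.integrable_sum integrable_scaleR_left gauss_lin)
  show "(\<integral>u. u \<partial>(std_gaussian::(real^'m) measure)) = 0"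
  proof (rule euclidean_eqI)
    fix b :: "real^'m" assume b: "b \<in> Basis"
    have "(\<integral>u. u \<partial>(std_gaussian::(real^'m) measure)) \<bullet> b = (\<integral>u. u \<bullet> b \<partial>(std_gaussian::(real^'m) measure))"
      using I by simp
    also have "\<dots> = 0" using gauss_lin[OF b] by simp
    finally show "(\<integral>u. u \<partial>(std_gaussian::(real^'m) measure)) \<bullet> b = 0 \<bullet> b" by simp
  qed
qed

theorem mainTheorem7:
  fixes \<phi>1 \<phi>2 :: "real ^ 'm \<Rightarrow> real" and L V \<mu> :: real and y :: "real ^ 'm"
  assumes lip: "L-lipschitz_on UNIV \<phi>1"
    and close: "\<And>w. \<bar>\<phi>1 w - \<phi>2 w\<bar> \<le> V"
    and mu: "\<mu> > 0"
  shows "(gauss_smooth \<mu> \<phi>1 has_derivative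
            (\<lambda>h. (\<integral>u. zo_grad \<mu> \<phi>1 \<phi>2 y u \<partial>std_gaussian) \<bullet> h)) (at y)
    \<and> integrable std_gaussian (\<lambda>u. zo_grad \<mu> \<phi>1 \<phi>2 y u)
    \<and> integrable std_gaussian (\<lambda>u. (norm (zo_grad \<mu> \<phi>1 \<phi>2 y u))\<^sup>2)
    \<and> (\<integral>u. (norm (zo_grad \<mu> \<phi>1 \<phi>2 y u))\<^sup>2 \<partial>std_gaussian)
           \<le> 2 * L\<^sup>2 * (real CARD('m) + 4)\<^sup>2 + 2 * real CARD('m) * V\<^sup>2 / \<mu>\<^sup>2"
proof -
  define \<psi> where "\<psi> u = \<phi>1 (y + \<mu> *\<^sub>R u)" for u
  have L0: "0 \<le> L" using lip by (rule lipschitz_on_nonneg)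
  have V0: "0 \<le> V" using close[of y] by linarith
  have c1: "continuous_on UNIV \<phi>1" using lip by (rule lipschitz_on_continuous_on)
  have cpsi: "continuous_on UNIV \<psi>" unfolding \<psi>_def
    by (rule continuous_on_compose2[OF c1]) (auto intro!: continuous_intros)
  have mpsi[measurable]: "\<psi> \<in> borel_measurable borel" using cpsi by (rule borel_measurable_continuous_onI)
  have lipb: "\<bar>\<psi> u - \<phi>1 y\<bar> \<le> L * \<mu> * norm u" for u
  proof -
    have "\<bar>\<psi> u - \<phi>1 y\<bar> = dist (\<phi>1 (y + \<mu> *\<^sub>R u)) (\<phi>1 y)" unfolding \<psi>_def by (simp add: dist_real_def)
    also have "\<dots> \<le> L * dist (y + \<mu> *\<^sub>R u) y" by (rule lipschitz_onD[OF lip]) auto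
    also have "\<dots> = L * \<mu> * norm u" using mu by (simp add: dist_norm)
    finally show ?thesis .
  qed
  define A where "A = \<bar>\<phi>1 y\<bar> + L * \<mu>"
  have A0: "0 \<le> A" unfolding A_def using L0 mu by simp
  have grow: "\<bar>\<psi> u\<bar> \<le> A * exp (norm u)" for u
  proof -
    have "\<bar>\<psi> u\<bar> \<le> \<bar>\<phi>1 y\<bar> + L * \<mu> * norm u" using lipb[of u] by linarith
    also have "\<dots> \<le> A * (1 + norm u)" unfolding A_def using L0 mu
      by (simp add: algebra_simps)
    also have "\<dots> \<le> A * exp (norm u)" using A0 one_plus_le_exp[of "norm u"] by (intro mult_left_mono) auto
    finally show ?thesis .
  qed
  define w where "w = (\<integral>v. \<psi> v *\<^sub>R v \<partial>std_gaussian)"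
  have iw: "integrable std_gaussian (\<lambda>v. \<psi> v *\<^sub>R v)" by (rule int_psi_scaled[OF cpsi A0 grow])
  have zo_eq: "zo_grad \<mu> \<phi>1 \<phi>2 y u = (1 / \<mu>) *\<^sub>R (\<psi> u *\<^sub>R u - \<phi>2 y *\<^sub>R u)" for u
    unfolding zo_grad_def \<psi>_def by (simp add: scaleR_diff_left)
  have izo: "integrable std_gaussian (\<lambda>u. zo_grad \<mu> \<phi>1 \<phi>2 y u)"
    unfolding zo_eq using iw gauss_id(1) by (intro integrable_scaleR_right integrable_diff integrable_scaleR_right) auto
  have G: "(\<integral>u. zo_grad \<mu> \<phi>1 \<phi>2 y u \<partial>std_gaussian) = (1 / \<mu>) *\<^sub>R w"
  proof -
    have "(\<integral>u. zo_grad \<mu> \<phi>1 \<phi>2 y u \<partial>std_gaussian) = (1 / \<mu>) *\<^sub>R ((\<integral>u. \<psi> u *\<^sub>R u \<partial>std_gaussian) - \<phi>2 y *\<^sub>R (\<integral>u. u \<partial>std_gaussian))"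
    proof -
      have "(\<integral>u. \<psi> u *\<^sub>R u - \<phi>2 y *\<^sub>R u \<partial>std_gaussian) = (\<integral>u. \<psi> u *\<^sub>R u \<partial>std_gaussian) - (\<integral>u. \<phi>2 y *\<^sub>R u \<partial>std_gaussian)"
        by (rule Bochner_Integration.integral_diff) (use iw gauss_id(1) in auto)
      then show ?thesis unfolding zo_eq by simp
    qed
    then show ?thesis unfolding w_def gauss_id(2) by simp
  qed
  define F where "F s = (\<integral>u. \<psi> (u + s) \<partial>std_gaussian)" for s
  have dF: "(F has_derivative (\<lambda>s. w \<bullet> s)) (at 0)"
    unfolding F_def w_def by (rule smooth_deriv[OF cpsi A0 grow])
  define T where "T y' = (1 / \<mu>) *\<^sub>R (y' - y)" for y'
  have dT: "(T has_derivative (\<lambda>h. (1 / \<mu>) *\<^sub>R h)) (at y)"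
    unfolding T_def by (auto intro!: derivative_eq_intros)
  have Ty: "T y = 0" unfolding T_def by simp
  have comp: "gauss_smooth \<mu> \<phi>1 = F \<circ> T"
  proof
    fix y'
    have "\<And>u. \<psi> (u + T y') = \<phi>1 (y' + \<mu> *\<^sub>R u)"
      unfolding \<psi>_def T_def using mu by (simp add: scaleR_add_right algebra_simps)
    then show "gauss_smooth \<mu> \<phi>1 y' = (F \<circ> T) y'" unfolding gauss_smooth_def F_def by simp
  qed
  have deriv: "(gauss_smooth \<mu> \<phi>1 has_derivative (\<lambda>h. (\<integral>u. zo_grad \<mu> \<phi>1 \<phi>2 y u \<partial>std_gaussian) \<bullet> h)) (at y)"
  proof -
    have "((F \<circ> T) has_derivative ((\<lambda>s. w \<bullet> s) \<circ> (\<lambda>h. (1 / \<mu>) *\<^sub>R h))) (at y)"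
      by (rule diff_chain_at[OF dT]) (simp add: Ty dF)
    moreover have "((\<lambda>s. w \<bullet> s) \<circ> (\<lambda>h. (1 / \<mu>) *\<^sub>R h)) = (\<lambda>h. (\<integral>u. zo_grad \<mu> \<phi>1 \<phi>2 y u \<partial>std_gaussian) \<bullet> h)"
      unfolding G by (auto simp: fun_eq_iff)
    ultimately show ?thesis unfolding comp by simp
  qed
  have ptw: "(norm (zo_grad \<mu> \<phi>1 \<phi>2 y u))\<^sup>2 \<le> 2 * L\<^sup>2 * (norm u)^4 + 2 * V\<^sup>2 / \<mu>\<^sup>2 * (norm u)\<^sup>2" for u
  proof -
    have n: "(norm (zo_grad \<mu> \<phi>1 \<phi>2 y u))\<^sup>2 = (\<psi> u - \<phi>2 y)\<^sup>2 * (norm u)\<^sup>2 / \<mu>\<^sup>2"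
      unfolding zo_grad_def \<psi>_def using mu by (simp add: power_mult_distrib power_divide)
    have a: "(\<psi> u - \<phi>1 y)\<^sup>2 \<le> (L * \<mu> * norm u)\<^sup>2"
      using lipb[of u] by (metis abs_ge_zero power2_abs power_mono)
    have b: "(\<phi>1 y - \<phi>2 y)\<^sup>2 \<le> V\<^sup>2"
      using close[of y] by (metis abs_ge_zero power2_abs power_mono)
    have "(\<psi> u - \<phi>2 y)\<^sup>2 \<le> 2 * (\<psi> u - \<phi>1 y)\<^sup>2 + 2 * (\<phi>1 y - \<phi>2 y)\<^sup>2"
    proof -
      have "0 \<le> ((\<psi> u - \<phi>1 y) - (\<phi>1 y - \<phi>2 y))\<^sup>2" by simp
      then show ?thesis by (simp add: power2_eq_square algebra_simps)
    qed
    also have "\<dots> \<le> 2 * (L * \<mu> * norm u)\<^sup>2 + 2 * V\<^sup>2" using a b by simp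
    finally have c: "(\<psi> u - \<phi>2 y)\<^sup>2 \<le> 2 * (L * \<mu> * norm u)\<^sup>2 + 2 * V\<^sup>2" .
    have "(\<psi> u - \<phi>2 y)\<^sup>2 * (norm u)\<^sup>2 / \<mu>\<^sup>2 \<le> (2 * (L * \<mu> * norm u)\<^sup>2 + 2 * V\<^sup>2) * (norm u)\<^sup>2 / \<mu>\<^sup>2"
      using c by (intro divide_right_mono mult_right_mono) auto
    also have "\<dots> = 2 * L\<^sup>2 * (norm u)^4 + 2 * V\<^sup>2 / \<mu>\<^sup>2 * (norm u)\<^sup>2"
      using mu by (simp add: field_simps power2_eq_square power4_eq_xxxx)
    finally show ?thesis unfolding n .
  qed
  have ib: "integrable std_gaussian (\<lambda>u::real^'m. 2 * L\<^sup>2 * (norm u)^4 + 2 * V\<^sup>2 / \<mu>\<^sup>2 * (norm u)\<^sup>2)"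
    by (intro Bochner_Integration.integrable_add integrable_mult_right gauss_sq(1) gauss_4(1))
  have mz: "(\<lambda>u. (norm (zo_grad \<mu> \<phi>1 \<phi>2 y u))\<^sup>2) \<in> borel_measurable std_gaussian"
    unfolding zo_eq by (simp add: gauss_def')
  have isq: "integrable std_gaussian (\<lambda>u. (norm (zo_grad \<mu> \<phi>1 \<phi>2 y u))\<^sup>2)"
  proof (rule Bochner_Integration.integrable_bound[OF ib mz])
    show "AE x in std_gaussian. norm ((norm (zo_grad \<mu> \<phi>1 \<phi>2 y x))\<^sup>2) \<le> norm (2 * L\<^sup>2 * (norm x)^4 + 2 * V\<^sup>2 / \<mu>\<^sup>2 * (norm x)\<^sup>2)"
    proof (rule AE_I2)
      fix x :: "real^'m"
      have "0 \<le> 2 * L\<^sup>2 * (norm x)^4 + 2 * V\<^sup>2 / \<mu>\<^sup>2 * (norm x)\<^sup>2" by simp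
      then show "norm ((norm (zo_grad \<mu> \<phi>1 \<phi>2 y x))\<^sup>2) \<le> norm (2 * L\<^sup>2 * (norm x)^4 + 2 * V\<^sup>2 / \<mu>\<^sup>2 * (norm x)\<^sup>2)"
        using ptw[of x] by simp
    qed
  qed
  have "(\<integral>u. (norm (zo_grad \<mu> \<phi>1 \<phi>2 y u))\<^sup>2 \<partial>std_gaussian) \<le>
      (\<integral>u. 2 * L\<^sup>2 * (norm u)^4 + 2 * V\<^sup>2 / \<mu>\<^sup>2 * (norm u)\<^sup>2 \<partial>(std_gaussian::(real^'m) measure))"
    using isq ib ptw by (intro Bochner_Integration.integral_mono) auto
  also have "\<dots> = (\<integral>u. 2 * L\<^sup>2 * (norm u)^4 \<partial>(std_gaussian::(real^'m) measure)) + (\<integral>u. 2 * V\<^sup>2 / \<mu>\<^sup>2 * (norm u)\<^sup>2 \<partial>(std_gaussian::(real^'m) measure))"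
    by (rule Bochner_Integration.integral_add) (rule integrable_mult_right, rule gauss_4(1), rule integrable_mult_right, rule gauss_sq(1))
  also have "\<dots> = 2 * L\<^sup>2 * (real CARD('m) * (real CARD('m) + 2)) + 2 * V\<^sup>2 / \<mu>\<^sup>2 * real CARD('m)"
    unfolding integral_mult_right_zero gauss_sq(2) gauss_4(2) ..
  also have "\<dots> \<le> 2 * L\<^sup>2 * (real CARD('m) + 4)\<^sup>2 + 2 * real CARD('m) * V\<^sup>2 / \<mu>\<^sup>2"
  proof -
    have "real CARD('m) * (real CARD('m) + 2) \<le> (real CARD('m) + 4)\<^sup>2"
      by (simp add: power2_eq_square algebra_simps)
    then have "2 * L\<^sup>2 * (real CARD('m) * (real CARD('m) + 2)) \<le> 2 * L\<^sup>2 * (real CARD('m) + 4)\<^sup>2"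
      by (intro mult_left_mono) auto
    moreover have "2 * V\<^sup>2 / \<mu>\<^sup>2 * real CARD('m) = 2 * real CARD('m) * V\<^sup>2 / \<mu>\<^sup>2" by simp
    ultimately show ?thesis by linarith
  qed
  finally show ?thesis using deriv izo isq by blast
qed

end
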